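(* Let $G$ be a finite simple graph with at least $3$ vertices, and let $v_1,v_2\in V(G)$ be two leaves of $G$. Then $M_2(G)=M_2(G_{(v_1,v_2)})$.
   Context: A leaf is a vertex with exactly one neighbor. If $v_1,v_2$ are leaves with incident edges $\{w_1,v_1\}$ and $\{w_2,v_2\}$, then $G_{(v_1,v_2)}$ is the graph obtained by identifying $v_1$ and $v_2$ into a single vertex $v_1v_2$: its vertex set is $V(G)\setminus\{v_1,v_2\}\cup\{v_1v_2\}$ and its edge set is $E(G)\setminus\{\{w_1,v_1\},\{w_2,v_2\}\}\cup\{\{w_1,v_1v_2\},\{w_2,v_1v_2\}\}$; edges of $G$ and $G_{(v_1,v_2)}$ are identified in the obvious way. A $2$-matching is a set of edges in which every vertex has degree at most $2$; $M_2(G)$ is the simplicial complex whose vertices are edges of $G$ and whose faces are $2$-matchings of $G$. *)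

theory Defs
  imports Main
begin

definition simple_graph :: "'a set \<Rightarrow> 'a set set \<Rightarrow> bool" where
  "simple_graph V E \<longleftrightarrow> finite V \<and> (\<forall>e\<in>E. e \<subseteq> V \<and> card e = 2)"

definition is_leaf :: "'a set \<Rightarrow> 'a set set \<Rightarrow> 'a \<Rightarrow> bool" where
  "is_leaf V E v \<longleftrightarrow> v \<in> V \<and> card {u. {u, v} \<in> E} = 1"

text \<open>Faces of the 2-matching complex of a (multi)graph whose edges are labelled by the
  set Es, edge e having endpoint set ends e: sets of edges in which every vertex has
  degree at most 2.\<close>
definition two_matching :: "('e \<Rightarrow> 'a set) \<Rightarrow> 'e set \<Rightarrow> 'e set \<Rightarrow> bool" where
  "two_matching ends Es F \<longleftrightarrow> F \<subseteq> Es \<and> (\<forall>x. card {e \<in> F. x \<in> ends e} \<le> 2)"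

definition M2_complex :: "('e \<Rightarrow> 'a set) \<Rightarrow> 'e set \<Rightarrow> 'e set set" where
  "M2_complex ends Es = {F. two_matching ends Es F}"

definition M2 :: "'a set set \<Rightarrow> 'a set set set" where
  "M2 E = M2_complex id E"

text \<open>The vertex map of the identification of v1 and v2; the merged vertex v1v2 is
  named v1 (v1 itself no longer occurs separately).\<close>
definition merge_vertex :: "'a \<Rightarrow> 'a \<Rightarrow> 'a \<Rightarrow> 'a" where
  "merge_vertex v1 v2 x = (if x = v2 then v1 else x)"

text \<open>M_2(G_(v1,v2)): the edges of G_(v1,v2) are identified with those of G; the edge
  labelled e of G has endpoints merge_vertex v1 v2 ` e in G_(v1,v2) (parallel edges
  may arise, so we keep the labels).\<close>
definition M2_identified :: "'a set set \<Rightarrow> 'a \<Rightarrow> 'a \<Rightarrow> 'a set set set" where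
  "M2_identified E v1 v2 = M2_complex (\<lambda>e. merge_vertex v1 v2 ` e) E"

end

theory Submission
  imports Defs
begin

lemma leaf_edges:
  assumes "simple_graph V E" "is_leaf V E v"
  obtains u where "{e\<in>E. v \<in> e} \<subseteq> {{u,v}}"
proof -
  from assms(2) obtain u where u: "{w. {w, v} \<in> E} = {u}"
    unfolding is_leaf_def by (auto simp: card_1_singleton_iff)
  have "{e\<in>E. v \<in> e} \<subseteq> {{u,v}}"
  proof
    fix e assume e: "e \<in> {e\<in>E. v \<in> e}"
    then have "card e = 2" using assms(1) unfolding simple_graph_def by auto
    then obtain a b where ab: "e = {a,b}" "a \<noteq> b" by (meson card_2_iff)
    have "\<exists>w. e = {w,v}" using e ab by auto
    then obtain w where "e = {w,v}" by blast
    with e u show "e \<in> {{u,v}}" by auto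
  qed
  then show ?thesis using that by blast
qed

lemma card_le_sub: "A \<subseteq> {a,b} \<Longrightarrow> card A \<le> 2"
proof -
  assume "A \<subseteq> {a,b}"
  then have "card A \<le> card {a,b}" by (rule card_mono[rotated]) simp
  also have "card {a,b} \<le> 2" by (cases "a = b") auto
  finally show ?thesis .
qed

theorem mainTheorem12:
  fixes V :: "'a set" and E :: "'a set set" and v1 v2 :: 'a
  assumes "simple_graph V E"
    and "card V \<ge> 3"
    and "is_leaf V E v1" and "is_leaf V E v2"
    and "v1 \<noteq> v2"
  shows "M2 E = M2_identified E v1 v2"
proof -
  obtain u1 where u1: "{e\<in>E. v1 \<in> e} \<subseteq> {{u1,v1}}" by (rule leaf_edges[OF assms(1) assms(3)])
  obtain u2 where u2: "{e\<in>E. v2 \<in> e} \<subseteq> {{u2,v2}}" by (rule leaf_edges[OF assms(1) assms(4)])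
  have mem: "x \<in> merge_vertex v1 v2 ` e \<longleftrightarrow>
      (if x = v1 then v1 \<in> e \<or> v2 \<in> e else if x = v2 then False else x \<in> e)" for x e
    using assms(5) unfolding merge_vertex_def by (auto simp: image_iff)
  have "two_matching id E F \<longleftrightarrow> two_matching (\<lambda>e. merge_vertex v1 v2 ` e) E F" for F
  proof
    assume A: "two_matching id E F"
    show "two_matching (\<lambda>e. merge_vertex v1 v2 ` e) E F"
      unfolding two_matching_def
    proof (intro conjI allI)
      show "F \<subseteq> E" using A by (simp add: two_matching_def)
      fix x
      show "card {e \<in> F. x \<in> merge_vertex v1 v2 ` e} \<le> 2"
      proof (cases "x = v1")
        case True
        then have "{e \<in> F. x \<in> merge_vertex v1 v2 ` e} \<subseteq> {{u1,v1},{u2,v2}}"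
          using u1 u2 \<open>F \<subseteq> E\<close> mem[of x] by auto
        then show ?thesis by (rule card_le_sub)
      next
        case False
        show ?thesis
        proof (cases "x = v2")
          case True
          then have "{e \<in> F. x \<in> merge_vertex v1 v2 ` e} = {}" using mem[of x] False by auto
          then show ?thesis by (simp only: card.empty)
        next
          case F2: False
          then have "{e \<in> F. x \<in> merge_vertex v1 v2 ` e} = {e \<in> F. x \<in> id e}"
            using mem[of x] False by auto
          moreover have "card {e \<in> F. x \<in> id e} \<le> 2" using A unfolding two_matching_def by blast
          ultimately show ?thesis by simp
        qed
      qed
    qed
  next
    assume A: "two_matching (\<lambda>e. merge_vertex v1 v2 ` e) E F"
    show "two_matching id E F"
      unfolding two_matching_def
    proof (intro conjI allI)
      show "F \<subseteq> E" using A by (simp add: two_matching_def)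
      fix x
      show "card {e \<in> F. x \<in> id e} \<le> 2"
      proof (cases "x = v1 \<or> x = v2")
        case True
        then have "{e \<in> F. x \<in> id e} \<subseteq> {{u1,v1},{u2,v2}}"
          using u1 u2 \<open>F \<subseteq> E\<close> by auto
        then show ?thesis by (rule card_le_sub)
      next
        case False
        then have "{e \<in> F. x \<in> merge_vertex v1 v2 ` e} = {e \<in> F. x \<in> id e}"
          using mem[of x] by auto
        moreover have "card {e \<in> F. x \<in> merge_vertex v1 v2 ` e} \<le> 2"
          using A unfolding two_matching_def by blast
        ultimately show ?thesis by simp
      qed
    qed
  qed
  note eq = this
  show ?thesis unfolding M2_def M2_identified_def M2_complex_def
    by (intro arg_cong[where f=Collect] ext eq)
qed

end
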